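(* Let $A=(\Sigma,q,N,\delta)$ be a partitioned LQCA with local transition matrix $Q$. Then the following are equivalent: (1) $Q$ is unitary; (2) $A$ is well-formed; (3) the time evolution operator $U_A$ is unitary.
   Context: A linear quantum cellular automaton (LQCA) is a tuple $A=(\Sigma,q,N,\delta)$ where $\Sigma$ is a finite nonempty set of states, $N=(a_1,\dots,a_r)$ is a strictly increasing sequence of integers, $\delta:\Sigma^r\to\mathbb C^\Sigma$ satisfies $\|\delta(w)\|>0$ for all $w$, and $q\in\Sigma$ satisfies $[\delta(q,\dots,q)](x)=1$ if $x=q$ and $0$ otherwise. A configuration is a map $c:\mathbb Z\to\Sigma$ with $c_i\ne q$ for only finitely many $i$; $\mathcal C_A$ is the set of configurations. With $c_{i+N}=(c_{i+a_1},\dots,c_{i+a_r})$, the time evolution operator is $U_A(d,c)=\prod_{i\in\mathbb Z}[\delta(c_{i+N})](d_i)$, viewed as the linear operator on $\ell_2(\mathcal C_A)$ sending $u$ to $d\mapsto\sum_cU_A(d,c)u(c)$. $A$ is well-formed if $U_A$ preserves the $\ell_2$ norm; $U_A$ is unitary if it is norm preserving and bijective. An LQCA is partitioned (PLQCA) if $\Sigma=\Sigma_1\times\cdots\times\Sigma_r$ for finite nonempty sets $\Sigma_j$, and $\delta=\delta_Q\circ\delta_p$ where $\delta_p:\Sigma^r\to\Sigma$ is $\delta_p((x_{1,1},\dots,x_{1,r}),\dots,(x_{r,1},\dots,x_{r,r}))=(x_{1,1},x_{2,2},\dots,x_{r,r})$ and $\delta_Q:\Sigma\to\mathbb C^\Sigma$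 is arbitrary (subject to $\delta$ making $A$ an LQCA). The local transition matrix is the $\Sigma\times\Sigma$ complex matrix $Q(y,x)=[\delta_Q(x)](y)$. *)

theory Defs
  imports "HOL-Analysis.Analysis"
begin

text \<open>A local rule delta maps a neighbourhood word (a list
of length r over S) to a vector in C^S, represented as a function 's => complex
(only its values on S matter).\<close>

definition vnorm :: "'s set \<Rightarrow> ('s \<Rightarrow> complex) \<Rightarrow> real" where
  "vnorm S f = sqrt (\<Sum>x\<in>S. (cmod (f x))\<^sup>2)"

definition lqca :: "'s set \<Rightarrow> 's \<Rightarrow> int list \<Rightarrow> ('s list \<Rightarrow> 's \<Rightarrow> complex) \<Rightarrow> bool" where
  "lqca S q N \<delta> \<longleftrightarrow>
     finite S \<and> S \<noteq> {} \<and> sorted_wrt (<) N \<and> q \<in> S \<and>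
     (\<forall>w. length w = length N \<and> set w \<subseteq> S \<longrightarrow> vnorm S (\<delta> w) > 0) \<and>
     (\<forall>x\<in>S. \<delta> (replicate (length N) q) x = (if x = q then 1 else 0))"

definition configs :: "'s set \<Rightarrow> 's \<Rightarrow> (int \<Rightarrow> 's) set" where
  "configs S q = {c. (\<forall>i. c i \<in> S) \<and> finite {i. c i \<noteq> q}}"

definition nbhd :: "(int \<Rightarrow> 's) \<Rightarrow> int list \<Rightarrow> int \<Rightarrow> 's list" where
  "nbhd c N i = map (\<lambda>a. c (i + a)) N"

text \<open>The matrix entry U_A(d,c) = prod over i in Z of delta(c_{i+N})(d_i).  All
factors with d_i = q and c_{i+N} = (q,...,q) equal delta(q,...,q)(q) = 1, so the
infinite product is the finite product over the remaining cells.\<close>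

definition U_coef :: "'s \<Rightarrow> int list \<Rightarrow> ('s list \<Rightarrow> 's \<Rightarrow> complex)
                       \<Rightarrow> (int \<Rightarrow> 's) \<Rightarrow> (int \<Rightarrow> 's) \<Rightarrow> complex" where
  "U_coef q N \<delta> d c =
     (\<Prod>i \<in> {i. d i \<noteq> q \<or> (\<exists>a\<in>set N. c (i + a) \<noteq> q)}. \<delta> (nbhd c N i) (d i))"

definition l2 :: "'s set \<Rightarrow> 's \<Rightarrow> ((int \<Rightarrow> 's) \<Rightarrow> complex) set" where
  "l2 S q = {u. (\<forall>c. c \<notin> configs S q \<longrightarrow> u c = 0) \<and>
                (\<lambda>c. (cmod (u c))\<^sup>2) summable_on configs S q}"

definition l2norm :: "'s set \<Rightarrow> 's \<Rightarrow> ((int \<Rightarrow> 's) \<Rightarrow> complex) \<Rightarrow> real" where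
  "l2norm S q u = sqrt (\<Sum>\<^sub>\<infinity>c\<in>configs S q. (cmod (u c))\<^sup>2)"

definition U_op :: "'s set \<Rightarrow> 's \<Rightarrow> int list \<Rightarrow> ('s list \<Rightarrow> 's \<Rightarrow> complex)
                     \<Rightarrow> ((int \<Rightarrow> 's) \<Rightarrow> complex) \<Rightarrow> ((int \<Rightarrow> 's) \<Rightarrow> complex)" where
  "U_op S q N \<delta> u =
     (\<lambda>d. if d \<in> configs S q then (\<Sum>\<^sub>\<infinity>c\<in>configs S q. U_coef q N \<delta> d c * u c) else 0)"

definition well_formed :: "'s set \<Rightarrow> 's \<Rightarrow> int list \<Rightarrow> ('s list \<Rightarrow> 's \<Rightarrow> complex) \<Rightarrow> bool" where
  "well_formed S q N \<delta> \<longleftrightarrow>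
     (\<forall>u \<in> l2 S q.
        (\<forall>d \<in> configs S q. (\<lambda>c. U_coef q N \<delta> d c * u c) summable_on configs S q) \<and>
        U_op S q N \<delta> u \<in> l2 S q \<and>
        l2norm S q (U_op S q N \<delta> u) = l2norm S q u)"

definition unitary_evolution :: "'s set \<Rightarrow> 's \<Rightarrow> int list \<Rightarrow> ('s list \<Rightarrow> 's \<Rightarrow> complex) \<Rightarrow> bool" where
  "unitary_evolution S q N \<delta> \<longleftrightarrow>
     well_formed S q N \<delta> \<and> bij_betw (U_op S q N \<delta>) (l2 S q) (l2 S q)"

text \<open>Sigma = Sigma_1 x ... x Sigma_r, with tuples represented as lists of length r
(component j, 0-based, lies in Sigs j).\<close>

definition PSig :: "(nat \<Rightarrow> 'a set) \<Rightarrow> nat \<Rightarrow> 'a list set" where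
  "PSig Sigs r = {x. length x = r \<and> (\<forall>j<r. x ! j \<in> Sigs j)}"

definition delta_p :: "nat \<Rightarrow> 'a list list \<Rightarrow> 'a list" where
  "delta_p r w = map (\<lambda>j. (w ! j) ! j) [0..<r]"

definition unitary_mat :: "'s set \<Rightarrow> ('s \<Rightarrow> 's \<Rightarrow> complex) \<Rightarrow> bool" where
  "unitary_mat S Q \<longleftrightarrow>
     (\<forall>x\<in>S. \<forall>x'\<in>S. (\<Sum>y\<in>S. cnj (Q y x) * Q y x') = (if x = x' then 1 else 0)) \<and>
     (\<forall>y\<in>S. \<forall>y'\<in>S. (\<Sum>x\<in>S. Q y x * cnj (Q y' x)) = (if y = y' then 1 else 0))"

end

theory Submission
  imports Defs "Jordan_Normal_Form.Determinant"
begin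


definition L2 :: "'c set \<Rightarrow> ('c \<Rightarrow> complex) set" where
  "L2 X = {u. (\<forall>c. c \<notin> X \<longrightarrow> u c = 0) \<and> (\<lambda>c. (cmod (u c))\<^sup>2) summable_on X}"

definition Kop :: "'c set \<Rightarrow> ('c \<Rightarrow> 'c \<Rightarrow> complex) \<Rightarrow> ('c \<Rightarrow> complex) \<Rightarrow> ('c \<Rightarrow> complex)" where
  "Kop X K u = (\<lambda>d. if d \<in> X then (\<Sum>\<^sub>\<infinity>c\<in>X. K d c * u c) else 0)"

definition good :: "'c set \<Rightarrow> ('c \<Rightarrow> 'c \<Rightarrow> complex) \<Rightarrow> bool" where
  "good X K \<longleftrightarrow>
    (\<forall>d\<in>X. finite {c\<in>X. K d c \<noteq> 0}) \<and> (\<forall>c\<in>X. finite {d\<in>X. K d c \<noteq> 0}) \<and>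
    (\<forall>c\<in>X. \<forall>c'\<in>X. (\<Sum>d\<in>{d\<in>X. K d c \<noteq> 0}. cnj (K d c) * K d c') = (if c = c' then 1 else 0)) \<and>
    (\<forall>d\<in>X. \<forall>d'\<in>X. (\<Sum>c\<in>{c\<in>X. K d c \<noteq> 0}. K d c * cnj (K d' c)) = (if d = d' then 1 else 0))"

lemma good_adj: "good X K \<Longrightarrow> good X (\<lambda>c d. cnj (K d c))"
  unfolding good_def by simp

lemma Kop_fin:
  assumes "d \<in> X" "finite F" "F \<subseteq> X" "\<And>c. c \<in> X \<Longrightarrow> K d c \<noteq> 0 \<Longrightarrow> c \<in> F"
  shows "Kop X K u d = (\<Sum>c\<in>F. K d c * u c)"
    and "(\<lambda>c. K d c * u c) summable_on X"
proof -
  have "(\<Sum>\<^sub>\<infinity>c\<in>X. K d c * u c) = (\<Sum>\<^sub>\<infinity>c\<in>F. K d c * u c)"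
    by (rule infsum_cong_neutral) (use assms in auto)
  then show "Kop X K u d = (\<Sum>c\<in>F. K d c * u c)" using assms by (simp add: Kop_def)
  have "(\<lambda>c. K d c * u c) summable_on X \<longleftrightarrow> (\<lambda>c. K d c * u c) summable_on F"
    by (rule summable_on_cong_neutral) (use assms in auto)
  then show "(\<lambda>c. K d c * u c) summable_on X" using assms by simp
qed

lemma cmod_sq: "complex_of_real ((cmod z)\<^sup>2) = cnj z * z"
  by (simp add: complex_norm_square mult.commute del: of_real_power)

lemma parseval_fin:
  assumes g: "good X K" and E: "finite E" "E \<subseteq> X"
  defines "D \<equiv> {d\<in>X. \<exists>e\<in>E. K d e \<noteq> 0}"
  shows "finite D" "(\<Sum>d\<in>D. (cmod (\<Sum>e\<in>E. K d e * u e))\<^sup>2) = (\<Sum>e\<in>E. (cmod (u e))\<^sup>2)"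
proof -
  have D: "D = (\<Union>e\<in>E. {d\<in>X. K d e \<noteq> 0})" unfolding D_def by auto
  show fD: "finite D" unfolding D using g E unfolding good_def by auto
  have orth: "(\<Sum>d\<in>D. cnj (K d e) * K d e') = (if e = e' then 1 else 0)" if "e \<in> E" "e' \<in> E" for e e'
  proof -
    have "(\<Sum>d\<in>D. cnj (K d e) * K d e') = (\<Sum>d\<in>{d\<in>X. K d e \<noteq> 0}. cnj (K d e) * K d e')"
      by (rule sum.mono_neutral_right) (use fD that in \<open>auto simp: D_def\<close>)
    also have "\<dots> = (if e = e' then 1 else 0)" using g that E unfolding good_def by blast
    finally show ?thesis .
  qed
  have "complex_of_real (\<Sum>d\<in>D. (cmod (\<Sum>e\<in>E. K d e * u e))\<^sup>2)
      = (\<Sum>d\<in>D. cnj (\<Sum>e\<in>E. K d e * u e) * (\<Sum>e'\<in>E. K d e' * u e'))"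
    by (simp only: of_real_sum cmod_sq)
  also have "\<dots> = (\<Sum>d\<in>D. \<Sum>e\<in>E. \<Sum>e'\<in>E. cnj (u e) * u e' * (cnj (K d e) * K d e'))"
    by (simp add: sum_distrib_left sum_distrib_right algebra_simps)
  also have "\<dots> = (\<Sum>e\<in>E. \<Sum>e'\<in>E. cnj (u e) * u e' * (\<Sum>d\<in>D. cnj (K d e) * K d e'))"
    by (simp add: sum_distrib_left sum.swap[of _ D])
  also have "\<dots> = (\<Sum>e\<in>E. \<Sum>e'\<in>E. cnj (u e) * u e' * (if e = e' then 1 else 0))"
    by (intro sum.cong refl) (simp add: orth)
  also have "\<dots> = (\<Sum>e\<in>E. cnj (u e) * u e)"
    using E by (simp add: if_distrib cong: if_cong)
  also have "\<dots> = complex_of_real (\<Sum>e\<in>E. (cmod (u e))\<^sup>2)"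
    by (simp only: of_real_sum cmod_sq)
  finally show "(\<Sum>d\<in>D. (cmod (\<Sum>e\<in>E. K d e * u e))\<^sup>2) = (\<Sum>e\<in>E. (cmod (u e))\<^sup>2)"
    using of_real_eq_iff by blast
qed

lemma sum_le_infsum_sq:
  assumes "u \<in> L2 X" "finite E" "E \<subseteq> X"
  shows "(\<Sum>e\<in>E. (cmod (u e))\<^sup>2) \<le> (\<Sum>\<^sub>\<infinity>c\<in>X. (cmod (u c))\<^sup>2)"
proof -
  have "(\<Sum>e\<in>E. (cmod (u e))\<^sup>2) = (\<Sum>\<^sub>\<infinity>e\<in>E. (cmod (u e))\<^sup>2)" using assms by simp
  also have "\<dots> \<le> (\<Sum>\<^sub>\<infinity>c\<in>X. (cmod (u c))\<^sup>2)"
    by (rule infsum_mono_neutral) (use assms in \<open>auto simp: L2_def\<close>)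
  finally show ?thesis .
qed

lemma Kop_bound_fin:
  assumes g: "good X K" and u: "u \<in> L2 X" and D0: "finite D0" "D0 \<subseteq> X"
  shows "(\<Sum>d\<in>D0. (cmod (Kop X K u d))\<^sup>2) \<le> (\<Sum>\<^sub>\<infinity>c\<in>X. (cmod (u c))\<^sup>2)"
proof -
  define E where "E = {e\<in>X. \<exists>d\<in>D0. K d e \<noteq> 0}"
  have E_eq: "E = (\<Union>d\<in>D0. {e\<in>X. K d e \<noteq> 0})" unfolding E_def by auto
  have fE: "finite E" unfolding E_eq using g D0 unfolding good_def by auto
  have EX: "E \<subseteq> X" unfolding E_def by auto
  define D where "D = {d\<in>X. \<exists>e\<in>E. K d e \<noteq> 0}"
  note P = parseval_fin(1)[OF g fE EX, folded D_def] parseval_fin(2)[OF g fE EX, where u=u, folded D_def]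
  have KE: "Kop X K u d = (\<Sum>e\<in>E. K d e * u e)" if "d \<in> D0" for d
    by (rule Kop_fin(1)) (use that D0 fE in \<open>auto simp: E_def\<close>)
  have "(\<Sum>d\<in>D0. (cmod (Kop X K u d))\<^sup>2) = (\<Sum>d\<in>D0. (cmod (\<Sum>e\<in>E. K d e * u e))\<^sup>2)"
    by (simp add: KE)
  also have "\<dots> \<le> (\<Sum>d\<in>D0 \<union> D. (cmod (\<Sum>e\<in>E. K d e * u e))\<^sup>2)"
    by (rule sum_mono2) (use D0 P in auto)
  also have "\<dots> = (\<Sum>d\<in>D. (cmod (\<Sum>e\<in>E. K d e * u e))\<^sup>2)"
  proof (rule sum.mono_neutral_right)
    show "finite (D0 \<union> D)" using D0 P by auto
    show "\<forall>i\<in>D0 \<union> D - D. (cmod (\<Sum>e\<in>E. K i e * u e))\<^sup>2 = 0"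
    proof
      fix d assume "d \<in> D0 \<union> D - D"
      then have "\<forall>e\<in>E. K d e = 0" using D0 by (auto simp: D_def)
      then show "(cmod (\<Sum>e\<in>E. K d e * u e))\<^sup>2 = 0" by simp
    qed
  qed auto
  also have "\<dots> = (\<Sum>e\<in>E. (cmod (u e))\<^sup>2)" by (rule P(2))
  also have "\<dots> \<le> (\<Sum>\<^sub>\<infinity>c\<in>X. (cmod (u c))\<^sup>2)" by (rule sum_le_infsum_sq[OF u fE EX])
  finally show ?thesis .
qed

lemma Kop_L2:
  assumes g: "good X K" and u: "u \<in> L2 X"
  shows "Kop X K u \<in> L2 X"
    and "(\<Sum>\<^sub>\<infinity>c\<in>X. (cmod (Kop X K u c))\<^sup>2) \<le> (\<Sum>\<^sub>\<infinity>c\<in>X. (cmod (u c))\<^sup>2)"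
proof -
  have sm: "(\<lambda>c. (cmod (Kop X K u c))\<^sup>2) summable_on X"
  proof (rule nonneg_bdd_above_summable_on)
    show "bdd_above ((\<lambda>F. \<Sum>c\<in>F. (cmod (Kop X K u c))\<^sup>2) ` {F. F \<subseteq> X \<and> finite F})"
      using Kop_bound_fin[OF g u] by (auto intro!: bdd_aboveI)
  qed auto
  then show "Kop X K u \<in> L2 X" by (auto simp: L2_def Kop_def)
  show "(\<Sum>\<^sub>\<infinity>c\<in>X. (cmod (Kop X K u c))\<^sup>2) \<le> (\<Sum>\<^sub>\<infinity>c\<in>X. (cmod (u c))\<^sup>2)"
    by (rule infsum_le_finite_sums[OF sm]) (use Kop_bound_fin[OF g u] in auto)
qed

lemma Kop_inv:
  assumes g: "good X K" and u: "\<And>c. c \<notin> X \<Longrightarrow> u c = 0"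
  shows "Kop X (\<lambda>c d. cnj (K d c)) (Kop X K u) = u"
proof
  fix c
  show "Kop X (\<lambda>c d. cnj (K d c)) (Kop X K u) c = u c"
  proof (cases "c \<in> X")
    case False then show ?thesis using u by (simp add: Kop_def)
  next
    case cX: True
    define Dc where "Dc = {d\<in>X. K d c \<noteq> 0}"
    have fDc: "finite Dc" using g cX unfolding good_def Dc_def by auto
    define E where "E = {e\<in>X. \<exists>d\<in>Dc. K d e \<noteq> 0}"
    have E_eq: "E = (\<Union>d\<in>Dc. {e\<in>X. K d e \<noteq> 0})" unfolding E_def by auto
    have fE: "finite E" unfolding E_eq using g fDc unfolding good_def Dc_def by auto
    have O1: "(\<Sum>d\<in>Dc. cnj (K d c) * K d e) = (if c = e then 1 else 0)" if "e \<in> X" for e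
      using g cX that unfolding good_def Dc_def by blast
    have "Dc \<noteq> {}" using O1[OF cX] by auto
    then have cE: "c \<in> E" using cX by (auto simp: E_def Dc_def)
    have "Kop X (\<lambda>c d. cnj (K d c)) (Kop X K u) c = (\<Sum>d\<in>Dc. cnj (K d c) * Kop X K u d)"
      by (rule Kop_fin(1)) (use cX fDc in \<open>auto simp: Dc_def\<close>)
    also have "\<dots> = (\<Sum>d\<in>Dc. cnj (K d c) * (\<Sum>e\<in>E. K d e * u e))"
    proof (intro sum.cong refl)
      fix d assume "d \<in> Dc"
      then show "cnj (K d c) * Kop X K u d = cnj (K d c) * (\<Sum>e\<in>E. K d e * u e)"
        using Kop_fin(1)[of d X E K u] fE by (auto simp: E_def Dc_def)
    qed
    also have "\<dots> = (\<Sum>e\<in>E. u e * (\<Sum>d\<in>Dc. cnj (K d c) * K d e))"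
      by (simp add: sum_distrib_left sum.swap[of _ Dc] algebra_simps)
    also have "\<dots> = (\<Sum>e\<in>E. u e * (if c = e then 1 else 0))"
      by (intro sum.cong refl) (simp add: O1 E_def)
    also have "\<dots> = u c" using fE cE by (simp add: if_distrib cong: if_cong)
    finally show ?thesis .
  qed
qed

lemma good_unitary:
  assumes g: "good X K"
  shows "\<forall>u\<in>L2 X. (\<forall>d\<in>X. (\<lambda>c. K d c * u c) summable_on X) \<and> Kop X K u \<in> L2 X \<and>
           (\<Sum>\<^sub>\<infinity>c\<in>X. (cmod (Kop X K u c))\<^sup>2) = (\<Sum>\<^sub>\<infinity>c\<in>X. (cmod (u c))\<^sup>2)"
    and "bij_betw (Kop X K) (L2 X) (L2 X)"
proof -
  have g': "good X (\<lambda>c d. cnj (K d c))" by (rule good_adj[OF g])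
  have KK: "(\<lambda>c d. cnj (cnj (K c d))) = K" by simp
  have inv1: "Kop X (\<lambda>c d. cnj (K d c)) (Kop X K u) = u" if "u \<in> L2 X" for u
    by (rule Kop_inv[OF g]) (use that in \<open>auto simp: L2_def\<close>)
  have inv2: "Kop X K (Kop X (\<lambda>c d. cnj (K d c)) u) = u" if "u \<in> L2 X" for u
    using Kop_inv[OF g', of u] that by (auto simp: L2_def)
  show "\<forall>u\<in>L2 X. (\<forall>d\<in>X. (\<lambda>c. K d c * u c) summable_on X) \<and> Kop X K u \<in> L2 X \<and>
           (\<Sum>\<^sub>\<infinity>c\<in>X. (cmod (Kop X K u c))\<^sup>2) = (\<Sum>\<^sub>\<infinity>c\<in>X. (cmod (u c))\<^sup>2)"
  proof (intro ballI conjI)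
    fix u assume u: "u \<in> L2 X"
    show "(\<lambda>c. K d c * u c) summable_on X" if "d \<in> X" for d
      by (rule Kop_fin(2)[of d X "{c\<in>X. K d c \<noteq> 0}"]) (use g that in \<open>auto simp: good_def\<close>)
    show "Kop X K u \<in> L2 X" by (rule Kop_L2(1)[OF g u])
    have a: "(\<Sum>\<^sub>\<infinity>c\<in>X. (cmod (Kop X K u c))\<^sup>2) \<le> (\<Sum>\<^sub>\<infinity>c\<in>X. (cmod (u c))\<^sup>2)"
      by (rule Kop_L2(2)[OF g u])
    have b: "(\<Sum>\<^sub>\<infinity>c\<in>X. (cmod (Kop X (\<lambda>c d. cnj (K d c)) (Kop X K u) c))\<^sup>2) \<le> (\<Sum>\<^sub>\<infinity>c\<in>X. (cmod (Kop X K u c))\<^sup>2)"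
      by (rule Kop_L2(2)[OF g' Kop_L2(1)[OF g u]])
    show "(\<Sum>\<^sub>\<infinity>c\<in>X. (cmod (Kop X K u c))\<^sup>2) = (\<Sum>\<^sub>\<infinity>c\<in>X. (cmod (u c))\<^sup>2)"
      using a b inv1[OF u] by simp
  qed
  show "bij_betw (Kop X K) (L2 X) (L2 X)"
    unfolding bij_betw_def
  proof
    show "inj_on (Kop X K) (L2 X)"
      by (rule inj_on_inverseI[where g="Kop X (\<lambda>c d. cnj (K d c))"]) (rule inv1)
    show "Kop X K ` L2 X = L2 X"
    proof
      show "Kop X K ` L2 X \<subseteq> L2 X" using Kop_L2(1)[OF g] by auto
      show "L2 X \<subseteq> Kop X K ` L2 X"
      proof
        fix v assume v: "v \<in> L2 X"
        then have "v = Kop X K (Kop X (\<lambda>c d. cnj (K d c)) v)" using inv2 by simp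
        then show "v \<in> Kop X K ` L2 X" using Kop_L2(1)[OF g' v] by blast
      qed
    qed
  qed
qed

lemma good_cong:
  assumes g: "good X K" and e: "\<And>d c. d \<in> X \<Longrightarrow> c \<in> X \<Longrightarrow> K' d c = K d c"
  shows "good X K'"
proof -
  have s1: "{c\<in>X. K' d c \<noteq> 0} = {c\<in>X. K d c \<noteq> 0}" if "d \<in> X" for d using e that by auto
  have s2: "{d\<in>X. K' d c \<noteq> 0} = {d\<in>X. K d c \<noteq> 0}" if "c \<in> X" for c using e that by auto
  show ?thesis unfolding good_def
  proof (intro conjI ballI)
    fix d assume "d \<in> X" then show "finite {c\<in>X. K' d c \<noteq> 0}" using g s1 by (simp add: good_def)
  next
    fix c assume "c \<in> X" then show "finite {d\<in>X. K' d c \<noteq> 0}" using g s2 by (simp add: good_def)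
  next
    fix c c' assume c: "c \<in> X" "c' \<in> X"
    have "(\<Sum>d\<in>{d\<in>X. K' d c \<noteq> 0}. cnj (K' d c) * K' d c') = (\<Sum>d\<in>{d\<in>X. K d c \<noteq> 0}. cnj (K d c) * K d c')"
      unfolding s2[OF c(1)] by (rule sum.cong) (use c e in auto)
    then show "(\<Sum>d\<in>{d\<in>X. K' d c \<noteq> 0}. cnj (K' d c) * K' d c') = (if c = c' then 1 else 0)"
      using g c unfolding good_def by simp
  next
    fix d d' assume d: "d \<in> X" "d' \<in> X"
    have "(\<Sum>c\<in>{c\<in>X. K' d c \<noteq> 0}. K' d c * cnj (K' d' c)) = (\<Sum>c\<in>{c\<in>X. K d c \<noteq> 0}. K d c * cnj (K d' c))"
      unfolding s1[OF d(1)] by (rule sum.cong) (use d e in auto)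
    then show "(\<Sum>c\<in>{c\<in>X. K' d c \<noteq> 0}. K' d c * cnj (K' d' c)) = (if d = d' then 1 else 0)"
      using g d unfolding good_def by simp
  qed
qed

lemma Kop_cong:
  assumes "\<And>d c. d \<in> X \<Longrightarrow> c \<in> X \<Longrightarrow> K' d c = K d c"
  shows "Kop X K' u = Kop X K u"
proof
  fix d show "Kop X K' u d = Kop X K u d"
    unfolding Kop_def using assms by (cases "d \<in> X") (simp_all cong: infsum_cong)
qed

lemma good_perm:
  assumes g: "good X K" and P: "bij_betw P X X"
  shows "good X (\<lambda>d c. K d (P c))"
proof -
  have PX: "P c \<in> X" if "c \<in> X" for c using bij_betw_apply[OF P that] .
  have inj: "inj_on P X" using bij_betw_imp_inj_on[OF P] .
  have im: "P ` X = X" using bij_betw_imp_surj_on[OF P] .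
  have set1: "{c\<in>X. K d (P c) \<noteq> 0} = P -` {e\<in>X. K d e \<noteq> 0} \<inter> X" for d using PX by auto
  have img: "P ` {c\<in>X. K d (P c) \<noteq> 0} = {e\<in>X. K d e \<noteq> 0}" for d
  proof
    show "P ` {c\<in>X. K d (P c) \<noteq> 0} \<subseteq> {e\<in>X. K d e \<noteq> 0}" using PX by auto
    show "{e\<in>X. K d e \<noteq> 0} \<subseteq> P ` {c\<in>X. K d (P c) \<noteq> 0}"
    proof
      fix e assume "e \<in> {e\<in>X. K d e \<noteq> 0}"
      then have "e \<in> P ` X" "K d e \<noteq> 0" using im by auto
      then obtain c where "c \<in> X" "e = P c" "K d e \<noteq> 0" by blast
      then show "e \<in> P ` {c\<in>X. K d (P c) \<noteq> 0}" by auto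
    qed
  qed
  have bs: "bij_betw P {c\<in>X. K d (P c) \<noteq> 0} {e\<in>X. K d e \<noteq> 0}" for d
    unfolding bij_betw_def using img inj_on_subset[OF inj] by auto
  show ?thesis unfolding good_def
  proof (intro conjI ballI)
    fix d assume "d \<in> X"
    then show "finite {c\<in>X. K d (P c) \<noteq> 0}" unfolding set1
      using g inj by (intro finite_vimage_IntI) (auto simp: good_def)
  next
    fix c assume "c \<in> X"
    then show "finite {d\<in>X. K d (P c) \<noteq> 0}" using g PX by (auto simp: good_def)
  next
    fix c c' assume c: "c \<in> X" "c' \<in> X"
    have "(\<Sum>d\<in>{d\<in>X. K d (P c) \<noteq> 0}. cnj (K d (P c)) * K d (P c')) = (if P c = P c' then 1 else 0)"
      using g PX c unfolding good_def by blast
    also have "\<dots> = (if c = c' then 1 else 0)" using inj c by (auto dest: inj_onD)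
    finally show "(\<Sum>d\<in>{d\<in>X. K d (P c) \<noteq> 0}. cnj (K d (P c)) * K d (P c')) = (if c = c' then 1 else 0)" .
  next
    fix d d' assume d: "d \<in> X" "d' \<in> X"
    have "(\<Sum>c\<in>{c\<in>X. K d (P c) \<noteq> 0}. K d (P c) * cnj (K d' (P c)))
        = (\<Sum>e\<in>{e\<in>X. K d e \<noteq> 0}. K d e * cnj (K d' e))"
      using sum.reindex_bij_betw[OF bs[of d], of "\<lambda>e. K d e * cnj (K d' e)"] by simp
    also have "\<dots> = (if d = d' then 1 else 0)" using g d unfolding good_def by blast
    finally show "(\<Sum>c\<in>{c\<in>X. K d (P c) \<noteq> 0}. K d (P c) * cnj (K d' (P c))) = (if d = d' then 1 else 0)" .
  qed
qed



lemma col_to_row: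
  fixes Q :: "'s \<Rightarrow> 's \<Rightarrow> complex"
  assumes fin: "finite S"
    and col: "\<forall>x\<in>S. \<forall>x'\<in>S. (\<Sum>y\<in>S. cnj (Q y x) * Q y x') = (if x = x' then 1 else 0)"
  shows "\<forall>y\<in>S. \<forall>y'\<in>S. (\<Sum>x\<in>S. Q y x * cnj (Q y' x)) = (if y = y' then 1 else 0)"
proof -
  obtain xs where xs: "set xs = S" "distinct xs" using finite_distinct_list[OF fin] by blast
  define n where "n = length xs"
  have bij: "bij_betw ((!) xs) {..<n} S" unfolding n_def using xs bij_betw_nth by blast
  define A where "A = mat n n (\<lambda>(i,j). Q (xs!i) (xs!j))"
  define B where "B = mat n n (\<lambda>(i,j). cnj (Q (xs!j) (xs!i)))"
  have A: "A \<in> carrier_mat n n" and B: "B \<in> carrier_mat n n" by (auto simp: A_def B_def)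
  have reidx: "(\<Sum>k<n. f (xs!k)) = (\<Sum>y\<in>S. f y)" for f :: "'s \<Rightarrow> complex"
    using sum.reindex_bij_betw[OF bij, of f] by simp
  have "B * A = 1\<^sub>m n"
  proof (rule eq_matI)
    fix i j assume ij: "i < dim_row (1\<^sub>m n)" "j < dim_col (1\<^sub>m n)"
    then have ij': "i < n" "j < n" by auto
    have "(B * A) $$ (i, j) = (\<Sum>k<n. cnj (Q (xs!k) (xs!i)) * Q (xs!k) (xs!j))"
      using ij' by (simp add: A_def B_def scalar_prod_def atLeast0LessThan)
    also have "\<dots> = (\<Sum>y\<in>S. cnj (Q y (xs!i)) * Q y (xs!j))" by (rule reidx)
    also have "\<dots> = (if xs!i = xs!j then 1 else 0)" using col ij' xs n_def by auto
    also have "\<dots> = 1\<^sub>m n $$ (i, j)" using ij' xs(2) n_def by (simp add: nth_eq_iff_index_eq)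
    finally show "(B * A) $$ (i, j) = 1\<^sub>m n $$ (i, j)" .
  qed (auto simp: A_def B_def)
  then have AB: "A * B = 1\<^sub>m n" by (rule mat_mult_left_right_inverse[OF B A])
  show ?thesis
  proof (intro ballI)
    fix y y' assume y: "y \<in> S" "y' \<in> S"
    obtain i where i: "i < n" "xs!i = y" using y xs n_def by (metis in_set_conv_nth)
    obtain j where j: "j < n" "xs!j = y'" using y xs n_def by (metis in_set_conv_nth)
    have "(\<Sum>x\<in>S. Q y x * cnj (Q y' x)) = (\<Sum>k<n. Q (xs!i) (xs!k) * cnj (Q (xs!j) (xs!k)))"
      using reidx[of "\<lambda>x. Q y x * cnj (Q y' x)"] i j by simp
    also have "\<dots> = (A * B) $$ (i, j)"
      using i j by (simp add: A_def B_def scalar_prod_def atLeast0LessThan)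
    also have "\<dots> = (if i = j then 1 else 0)" using AB i j by simp
    also have "\<dots> = (if y = y' then 1 else 0)" using i j xs(2) n_def by (auto simp: nth_eq_iff_index_eq)
    finally show "(\<Sum>x\<in>S. Q y x * cnj (Q y' x)) = (if y = y' then 1 else 0)" .
  qed
qed



locale plq =
  fixes Sigs :: "nat \<Rightarrow> 'a set" and q :: "'a list" and N :: "int list"
    and dQ :: "'a list \<Rightarrow> 'a list \<Rightarrow> complex"
  assumes sigs: "\<forall>j < length N. finite (Sigs j) \<and> Sigs j \<noteq> {}"
    and lq: "lqca (PSig Sigs (length N)) q N (\<lambda>w. dQ (delta_p (length N) w))"
begin

abbreviation "r \<equiv> length N"
abbreviation "S \<equiv> PSig Sigs (length N)"
abbreviation "X \<equiv> configs S q"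

definition P :: "(int \<Rightarrow> 'a list) \<Rightarrow> int \<Rightarrow> 'a list" where
  "P c i = map (\<lambda>j. c (i + N!j) ! j) [0..<r]"
definition P' :: "(int \<Rightarrow> 'a list) \<Rightarrow> int \<Rightarrow> 'a list" where
  "P' c i = map (\<lambda>j. c (i - N!j) ! j) [0..<r]"
definition W :: "(int \<Rightarrow> 'a list) \<Rightarrow> (int \<Rightarrow> 'a list) \<Rightarrow> complex" where
  "W d e = (\<Prod>i\<in>{i. d i \<noteq> q \<or> e i \<noteq> q}. dQ (e i) (d i))"

lemma qS: "q \<in> S" and finS: "finite S" using lq by (auto simp: lqca_def)

lemma len_q: "length q = r" using qS by (simp add: PSig_def)

lemma memS: "x \<in> S \<longleftrightarrow> length x = r \<and> (\<forall>j<r. x!j \<in> Sigs j)" by (simp add: PSig_def)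

lemma quies: "y \<in> S \<Longrightarrow> dQ q y = (if y = q then 1 else 0)"
proof -
  assume y: "y \<in> S"
  have "delta_p r (replicate r q) = q"
    unfolding delta_p_def using len_q by (intro nth_equalityI) auto
  then show ?thesis using lq y unfolding lqca_def by force
qed

lemma P_nbhd: "delta_p r (nbhd c N i) = P c i"
  unfolding delta_p_def nbhd_def P_def by simp

lemma X_iff: "c \<in> X \<longleftrightarrow> (\<forall>i. c i \<in> S) \<and> finite {i. c i \<noteq> q}"
  by (simp add: configs_def)

lemma neq_q: assumes "length x = r" "x \<noteq> q" shows "\<exists>j<r. x!j \<noteq> q!j"
  using assms len_q nth_equalityI by metis

lemma P_supp: "{i. P c i \<noteq> q} \<subseteq> (\<Union>j<r. (\<lambda>k. k - N!j) ` {k. c k \<noteq> q})"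
proof
  fix i assume "i \<in> {i. P c i \<noteq> q}"
  then obtain j where j: "j < r" "P c i ! j \<noteq> q ! j" using neq_q[of "P c i"] by (auto simp: P_def)
  then have "c (i + N!j) \<noteq> q" by (auto simp: P_def)
  then show "i \<in> (\<Union>j<r. (\<lambda>k. k - N!j) ` {k. c k \<noteq> q})" using j(1)
    by (auto intro!: bexI[of _ j] image_eqI[of _ _ "i + N!j"])
qed

lemma P'_supp: "{i. P' c i \<noteq> q} \<subseteq> (\<Union>j<r. (\<lambda>k. k + N!j) ` {k. c k \<noteq> q})"
proof
  fix i assume "i \<in> {i. P' c i \<noteq> q}"
  then obtain j where j: "j < r" "P' c i ! j \<noteq> q ! j" using neq_q[of "P' c i"] by (auto simp: P'_def)
  then have "c (i - N!j) \<noteq> q" by (auto simp: P'_def)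
  then show "i \<in> (\<Union>j<r. (\<lambda>k. k + N!j) ` {k. c k \<noteq> q})" using j(1)
    by (auto intro!: bexI[of _ j] image_eqI[of _ _ "i - N!j"])
qed

lemma P_X: assumes "c \<in> X" shows "P c \<in> X"
proof -
  have "P c i \<in> S" for i using assms by (auto simp: memS X_iff P_def)
  moreover have "finite {i. P c i \<noteq> q}"
    by (rule finite_subset[OF P_supp]) (use assms in \<open>auto simp: X_iff\<close>)
  ultimately show ?thesis by (simp add: X_iff)
qed

lemma P'_X: assumes "c \<in> X" shows "P' c \<in> X"
proof -
  have "P' c i \<in> S" for i using assms by (auto simp: memS X_iff P'_def)
  moreover have "finite {i. P' c i \<noteq> q}"
    by (rule finite_subset[OF P'_supp]) (use assms in \<open>auto simp: X_iff\<close>)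
  ultimately show ?thesis by (simp add: X_iff)
qed

lemma P'_P: assumes "c \<in> X" shows "P' (P c) = c"
proof
  fix k
  have "length (c k) = r" using assms by (auto simp: X_iff memS)
  then show "P' (P c) k = c k" by (auto simp: P'_def P_def intro!: nth_equalityI)
qed

lemma P_P': assumes "c \<in> X" shows "P (P' c) = c"
proof
  fix k
  have "length (c k) = r" using assms by (auto simp: X_iff memS)
  then show "P (P' c) k = c k" by (auto simp: P'_def P_def intro!: nth_equalityI)
qed

lemma bijP: "bij_betw P X X"
  by (rule bij_betw_byWitness[where f'=P']) (auto simp: P'_P P_P' P_X P'_X)

lemma W_ext:
  assumes "d \<in> X" "e \<in> X" "finite G" "{i. d i \<noteq> q \<or> e i \<noteq> q} \<subseteq> G"
  shows "W d e = (\<Prod>i\<in>G. dQ (e i) (d i))"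
  unfolding W_def
  by (rule prod.mono_neutral_left) (use assms qS quies in auto)

lemma U_coef_W:
  assumes d: "d \<in> X" and c: "c \<in> X"
  shows "U_coef q N (\<lambda>w. dQ (delta_p r w)) d c = W d (P c)"
proof -
  let ?F = "{i. d i \<noteq> q \<or> (\<exists>a\<in>set N. c (i + a) \<noteq> q)}"
  have F: "?F \<subseteq> {i. d i \<noteq> q} \<union> (\<Union>a\<in>set N. (\<lambda>k. k - a) ` {k. c k \<noteq> q})"
  proof
    fix i assume "i \<in> ?F"
    then consider "d i \<noteq> q" | a where "a \<in> set N" "c (i+a) \<noteq> q" by auto
    then show "i \<in> {i. d i \<noteq> q} \<union> (\<Union>a\<in>set N. (\<lambda>k. k - a) ` {k. c k \<noteq> q})"
    proof cases
      case 1 then show ?thesis by simp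
    next
      case 2
      then have "i \<in> (\<lambda>k. k - a) ` {k. c k \<noteq> q}" by (intro image_eqI[of _ _ "i+a"]) auto
      then show ?thesis using 2 by blast
    qed
  qed
  have fF: "finite ?F" by (rule finite_subset[OF F]) (use d c in \<open>auto simp: X_iff\<close>)
  have sub: "{i. d i \<noteq> q \<or> P c i \<noteq> q} \<subseteq> ?F"
  proof
    fix i assume "i \<in> {i. d i \<noteq> q \<or> P c i \<noteq> q}"
    moreover have "P c i \<noteq> q \<Longrightarrow> \<exists>a\<in>set N. c (i + a) \<noteq> q"
    proof -
      assume "P c i \<noteq> q"
      then obtain j where j: "j < r" "P c i ! j \<noteq> q ! j" using neq_q[of "P c i"] by (auto simp: P_def)
      then show ?thesis by (auto simp: P_def intro!: bexI[of _ "N!j"])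
    qed
    ultimately show "i \<in> ?F" by auto
  qed
  show ?thesis
    unfolding U_coef_def P_nbhd using W_ext[OF d P_X[OF c] fF sub] by simp
qed

definition CS :: "int set \<Rightarrow> (int \<Rightarrow> 'a list) set" where
  "CS G = {d\<in>X. \<forall>i. i \<notin> G \<longrightarrow> d i = q}"

lemma CS_bij:
  assumes G: "finite G"
  shows "bij_betw (\<lambda>d. restrict d G) (CS G) (PiE G (\<lambda>_. S))"
proof (rule bij_betw_byWitness[where f'="\<lambda>g i. if i \<in> G then g i else q"])
  show "\<forall>a\<in>CS G. (\<lambda>i. if i \<in> G then restrict a G i else q) = a"
    by (auto simp: CS_def)
  show "\<forall>a'\<in>PiE G (\<lambda>_. S). restrict (\<lambda>i. if i \<in> G then a' i else q) G = a'"
    by (auto simp: PiE_def extensional_def)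
  show "(\<lambda>d. restrict d G) ` CS G \<subseteq> PiE G (\<lambda>_. S)"
    by (auto simp: CS_def X_iff)
  show "(\<lambda>g i. if i \<in> G then g i else q) ` PiE G (\<lambda>_. S) \<subseteq> CS G"
  proof
    fix d assume "d \<in> (\<lambda>g i. if i \<in> G then g i else q) ` PiE G (\<lambda>_. S)"
    then obtain g where g: "g \<in> PiE G (\<lambda>_. S)" "d = (\<lambda>i. if i \<in> G then g i else q)" by blast
    have "{i. d i \<noteq> q} \<subseteq> G" using g by auto
    then have "finite {i. d i \<noteq> q}" using G finite_subset by blast
    then show "d \<in> CS G" using g qS by (auto simp: CS_def X_iff)
  qed
qed

lemma CS_finite: "finite G \<Longrightarrow> finite (CS G)"
proof -
  assume G: "finite G"
  have "finite (PiE G (\<lambda>_. S))" using G finS by (intro finite_PiE) auto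
  then show "finite (CS G)" using bij_betw_finite[OF CS_bij[OF G]] by simp
qed

lemma CS_prod:
  assumes G: "finite G"
  shows "(\<Sum>d\<in>CS G. \<Prod>i\<in>G. f i (d i)) = (\<Prod>i\<in>G. \<Sum>y\<in>S. (f i y :: complex))"
proof -
  have "(\<Prod>i\<in>G. \<Sum>y\<in>S. f i y) = (\<Sum>g\<in>PiE G (\<lambda>_. S). \<Prod>i\<in>G. f i (g i))"
    by (rule prod_sum_PiE) (use G finS in auto)
  also have "\<dots> = (\<Sum>d\<in>CS G. \<Prod>i\<in>G. f i (restrict d G i))"
    using sum.reindex_bij_betw[OF CS_bij[OF G], of "\<lambda>g. \<Prod>i\<in>G. f i (g i)"] by simp
  also have "\<dots> = (\<Sum>d\<in>CS G. \<Prod>i\<in>G. f i (d i))" by simp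
  finally show ?thesis by simp
qed

lemma W_zero2:
  assumes "d \<in> X" "e \<in> X" "d i \<noteq> q" "e i = q"
  shows "W d e = 0"
proof -
  have f: "finite ({i. d i \<noteq> q} \<union> {i. e i \<noteq> q})" using assms(1,2) by (simp add: X_iff)
  have "finite {i. d i \<noteq> q \<or> e i \<noteq> q}" by (rule finite_subset[OF _ f]) auto
  moreover have "dQ (e i) (d i) = 0" using assms quies[of "d i"] by (auto simp: X_iff)
  ultimately show ?thesis unfolding W_def using assms(3)
    by (subst prod_zero_iff) auto
qed

lemma supp_W2: "d \<in> X \<Longrightarrow> e \<in> X \<Longrightarrow> W d e \<noteq> 0 \<Longrightarrow> d \<in> CS {i. e i \<noteq> q}"
  using W_zero2 by (auto simp: CS_def)

context
  assumes U: "unitary_mat S (\<lambda>y x. dQ x y)"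
begin

lemma colU: "x \<in> S \<Longrightarrow> x' \<in> S \<Longrightarrow> (\<Sum>y\<in>S. cnj (dQ x y) * dQ x' y) = (if x = x' then 1 else 0)"
  using U unfolding unitary_mat_def by blast

lemma rowU: "y \<in> S \<Longrightarrow> y' \<in> S \<Longrightarrow> (\<Sum>x\<in>S. dQ x y * cnj (dQ x y')) = (if y = y' then 1 else 0)"
  using U unfolding unitary_mat_def by blast

lemma dQ_q_zero: assumes "x \<in> S" "x \<noteq> q" shows "dQ x q = 0"
proof -
  have "complex_of_real (\<Sum>x\<in>S. (cmod (dQ x q))\<^sup>2) = (\<Sum>x\<in>S. dQ x q * cnj (dQ x q))"
    by (simp only: of_real_sum cmod_sq mult.commute)
  also have "\<dots> = 1" using rowU[OF qS qS] by simp
  finally have s1: "(\<Sum>x\<in>S. (cmod (dQ x q))\<^sup>2) = 1"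
    by (metis of_real_eq_1_iff)
  have "(\<Sum>x\<in>S. (cmod (dQ x q))\<^sup>2) = (cmod (dQ q q))\<^sup>2 + (\<Sum>x\<in>S-{q}. (cmod (dQ x q))\<^sup>2)"
    using finS qS by (simp add: sum.remove)
  then have "(\<Sum>x\<in>S-{q}. (cmod (dQ x q))\<^sup>2) = 0" using s1 quies[OF qS] by simp
  then have "\<forall>x\<in>S-{q}. (cmod (dQ x q))\<^sup>2 = 0"
    using finS by (subst (asm) sum_nonneg_eq_0_iff) auto
  then show ?thesis using assms by auto
qed

lemma W_zero1:
  assumes "d \<in> X" "e \<in> X" "e i \<noteq> q" "d i = q"
  shows "W d e = 0"
proof -
  have f: "finite ({i. d i \<noteq> q} \<union> {i. e i \<noteq> q})" using assms(1,2) by (simp add: X_iff)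
  have "finite {i. d i \<noteq> q \<or> e i \<noteq> q}" by (rule finite_subset[OF _ f]) auto
  moreover have "dQ (e i) (d i) = 0" using assms dQ_q_zero[of "e i"] by (auto simp: X_iff)
  ultimately show ?thesis unfolding W_def using assms(3)
    by (subst prod_zero_iff) auto
qed

lemma supp_W1: "d \<in> X \<Longrightarrow> e \<in> X \<Longrightarrow> W d e \<noteq> 0 \<Longrightarrow> e \<in> CS {i. d i \<noteq> q}"
  using W_zero1 by (auto simp: CS_def)

lemma good_W: "good X W"
  unfolding good_def
proof (intro conjI ballI)
  fix d assume d: "d \<in> X"
  have "{c\<in>X. W d c \<noteq> 0} \<subseteq> CS {i. d i \<noteq> q}" using supp_W1 d by auto
  then show "finite {c\<in>X. W d c \<noteq> 0}" using CS_finite d finite_subset by (auto simp: X_iff)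
next
  fix c assume c: "c \<in> X"
  have "{d\<in>X. W d c \<noteq> 0} \<subseteq> CS {i. c i \<noteq> q}" using supp_W2 c by auto
  then show "finite {d\<in>X. W d c \<noteq> 0}" using CS_finite c finite_subset by (auto simp: X_iff)
next
  fix e e' assume e: "e \<in> X" "e' \<in> X"
  define G where "G = {i. e i \<noteq> q} \<union> {i. e' i \<noteq> q}"
  have fG: "finite G" using e by (auto simp: G_def X_iff)
  have "(\<Sum>d\<in>{d\<in>X. W d e \<noteq> 0}. cnj (W d e) * W d e') = (\<Sum>d\<in>CS G. cnj (W d e) * W d e')"
    by (rule sum.mono_neutral_left) (use CS_finite[OF fG] supp_W2 e in \<open>auto simp: CS_def G_def\<close>)
  also have "\<dots> = (\<Sum>d\<in>CS G. \<Prod>i\<in>G. cnj (dQ (e i) (d i)) * dQ (e' i) (d i))"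
  proof (rule sum.cong[OF refl])
    fix d assume d: "d \<in> CS G"
    then have dX: "d \<in> X" by (simp add: CS_def)
    have "W d e = (\<Prod>i\<in>G. dQ (e i) (d i))" "W d e' = (\<Prod>i\<in>G. dQ (e' i) (d i))"
      using W_ext[OF dX e(1) fG] W_ext[OF dX e(2) fG] d by (auto simp: CS_def G_def)
    then show "cnj (W d e) * W d e' = (\<Prod>i\<in>G. cnj (dQ (e i) (d i)) * dQ (e' i) (d i))"
      by (simp add: prod.distrib cnj_prod)
  qed
  also have "\<dots> = (\<Prod>i\<in>G. \<Sum>y\<in>S. cnj (dQ (e i) y) * dQ (e' i) y)"
    by (rule CS_prod[OF fG])
  also have "\<dots> = (\<Prod>i\<in>G. if e i = e' i then 1 else 0)"
    using e colU by (intro prod.cong refl) (auto simp: X_iff)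
  also have "\<dots> = (if e = e' then 1 else 0)"
  proof (cases "e = e'")
    case True then show ?thesis by simp
  next
    case False
    then obtain i where "e i \<noteq> e' i" by auto
    then have "i \<in> G" by (auto simp: G_def)
    then have "(\<Prod>i\<in>G. if e i = e' i then 1 else 0) = (0::complex)"
      using fG \<open>e i \<noteq> e' i\<close> by (intro prod_zero) auto
    then show ?thesis using False by simp
  qed
  finally show "(\<Sum>d\<in>{d\<in>X. W d e \<noteq> 0}. cnj (W d e) * W d e') = (if e = e' then 1 else 0)" .
next
  fix d d' assume d: "d \<in> X" "d' \<in> X"
  define G where "G = {i. d i \<noteq> q} \<union> {i. d' i \<noteq> q}"
  have fG: "finite G" using d by (auto simp: G_def X_iff)
  have "(\<Sum>e\<in>{e\<in>X. W d e \<noteq> 0}. W d e * cnj (W d' e)) = (\<Sum>e\<in>CS G. W d e * cnj (W d' e))"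
    by (rule sum.mono_neutral_left) (use CS_finite[OF fG] supp_W1 d in \<open>auto simp: CS_def G_def\<close>)
  also have "\<dots> = (\<Sum>e\<in>CS G. \<Prod>i\<in>G. dQ (e i) (d i) * cnj (dQ (e i) (d' i)))"
  proof (rule sum.cong[OF refl])
    fix e assume e: "e \<in> CS G"
    then have eX: "e \<in> X" by (simp add: CS_def)
    have "W d e = (\<Prod>i\<in>G. dQ (e i) (d i))" "W d' e = (\<Prod>i\<in>G. dQ (e i) (d' i))"
      using W_ext[OF d(1) eX fG] W_ext[OF d(2) eX fG] e by (auto simp: CS_def G_def)
    then show "W d e * cnj (W d' e) = (\<Prod>i\<in>G. dQ (e i) (d i) * cnj (dQ (e i) (d' i)))"
      by (simp add: prod.distrib cnj_prod)
  qed
  also have "\<dots> = (\<Prod>i\<in>G. \<Sum>x\<in>S. dQ x (d i) * cnj (dQ x (d' i)))"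
    by (rule CS_prod[OF fG])
  also have "\<dots> = (\<Prod>i\<in>G. if d i = d' i then 1 else 0)"
    using d rowU by (intro prod.cong refl) (auto simp: X_iff)
  also have "\<dots> = (if d = d' then 1 else 0)"
  proof (cases "d = d'")
    case True then show ?thesis by simp
  next
    case False
    then obtain i where "d i \<noteq> d' i" by auto
    then have "i \<in> G" by (auto simp: G_def)
    then have "(\<Prod>i\<in>G. if d i = d' i then 1 else 0) = (0::complex)"
      using fG \<open>d i \<noteq> d' i\<close> by (intro prod_zero) auto
    then show ?thesis using False by simp
  qed
  finally show "(\<Sum>e\<in>{e\<in>X. W d e \<noteq> 0}. W d e * cnj (W d' e)) = (if d = d' then 1 else 0)" .
qed

end

end


lemma fin_supp_infsum:
  assumes "finite F" "F \<subseteq> A" "\<And>x. x \<in> A \<Longrightarrow> x \<notin> F \<Longrightarrow> f x = 0"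
  shows "f summable_on A" "infsum f A = sum f F"
proof -
  have "f summable_on A \<longleftrightarrow> f summable_on F"
    by (rule summable_on_cong_neutral) (use assms in auto)
  then show "f summable_on A" using assms by simp
  have "infsum f A = infsum f F"
    by (rule infsum_cong_neutral) (use assms in auto)
  then show "infsum f A = sum f F" using assms by simp
qed

lemma polar:
  fixes M :: "'s \<Rightarrow> 's \<Rightarrow> complex"
  assumes fin: "finite S"
    and iso: "\<And>a. (\<Sum>y\<in>S. (cmod (\<Sum>x\<in>S. M x y * a x))\<^sup>2) = (\<Sum>x\<in>S. (cmod (a x))\<^sup>2)"
    and x: "x \<in> S" "x' \<in> S"
  shows "(\<Sum>y\<in>S. cnj (M x y) * M x' y) = (if x = x' then 1 else 0)"
proof -
  have isoC: "(\<Sum>y\<in>S. cnj (\<Sum>x\<in>S. M x y * a x) * (\<Sum>x\<in>S. M x y * a x)) = (\<Sum>x\<in>S. cnj (a x) * a x)" for a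
  proof -
    have "complex_of_real (\<Sum>y\<in>S. (cmod (\<Sum>x\<in>S. M x y * a x))\<^sup>2) = complex_of_real (\<Sum>x\<in>S. (cmod (a x))\<^sup>2)"
      using iso by simp
    then show ?thesis by (simp only: of_real_sum cmod_sq)
  qed
  define G where "G z z' = (\<Sum>y\<in>S. cnj (M z y) * M z' y)" for z z'
  have key: "G z z + cnj t * t * G z' z' + t * G z z' + cnj t * G z' z = (if z = z' then (1 + t) * cnj (1 + t) else 1 + cnj t * t)"
    if z: "z \<in> S" "z' \<in> S" for z z' t
  proof -
    define a where "a w = (if w = z then 1 else 0) + t * (if w = z' then 1 else 0)" for w
    have v: "(\<Sum>w\<in>S. M w y * a w) = M z y + t * M z' y" for y
    proof -
      have "M w y * a w = (if w = z then M z y else 0) + (if w = z' then t * M z' y else 0)" for w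
        by (auto simp: a_def algebra_simps)
      then show ?thesis using fin z by (simp add: sum.distrib)
    qed
    have "(\<Sum>w\<in>S. cnj (a w) * a w) = (if z = z' then (1 + t) * cnj (1 + t) else 1 + cnj t * t)"
    proof (cases "z = z'")
      case True
      then have "(\<Sum>w\<in>S. cnj (a w) * a w) = (\<Sum>w\<in>S. if w = z then cnj (1 + t) * (1 + t) else 0)"
        by (intro sum.cong refl) (auto simp: a_def)
      then show ?thesis using True fin z by (simp add: mult.commute)
    next
      case False
      then have "(\<Sum>w\<in>S. cnj (a w) * a w) = (\<Sum>w\<in>S. (if w = z then 1 else 0) + (if w = z' then cnj t * t else 0))"
        by (intro sum.cong refl) (auto simp: a_def)
      then show ?thesis using False fin z by (simp add: sum.distrib)
    qed
    moreover have "(\<Sum>y\<in>S. cnj (M z y + t * M z' y) * (M z y + t * M z' y))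
        = G z z + cnj t * t * G z' z' + t * G z z' + cnj t * G z' z"
      by (simp add: G_def algebra_simps sum.distrib sum_distrib_left)
    ultimately show ?thesis using isoC[of a] by (simp add: v)
  qed
  have norm1: "G z z = 1" if "z \<in> S" for z
    using key[OF that that, of 0] by simp
  have cG: "G z' z = cnj (G z z')" for z z' by (simp add: G_def mult.commute)
  show ?thesis
  proof (cases "x = x'")
    case True then show ?thesis using norm1 x by (simp add: G_def)
  next
    case False
    have e1: "G x x' + cnj (G x x') = 0" using key[OF x, of 1] False norm1 x cG[of x x'] by simp
    have e2: "\<i> * G x x' - \<i> * cnj (G x x') = 0" using key[OF x, of "\<i>"] False norm1 x cG[of x x'] by simp
    have "G x x' = 0"
    proof -
      from e2 have "G x x' = cnj (G x x')" by (simp add: right_diff_distrib[symmetric])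
      with e1 show ?thesis by simp
    qed
    then show ?thesis using False by (simp add: G_def)
  qed
qed

context plq
begin

abbreviation "dl \<equiv> (\<lambda>w. dQ (delta_p r w))"

lemma l2_eq: "l2 S q = L2 X" by (simp add: l2_def L2_def)
lemma U_op_eq: "U_op S q N dl = Kop X (U_coef q N dl)"
  by (intro ext) (simp add: U_op_def Kop_def)

lemma unitary_imp:
  assumes U: "unitary_mat S (\<lambda>y x. dQ x y)"
  shows "unitary_evolution S q N dl"
proof -
  have gK: "good X (U_coef q N dl)"
    by (rule good_cong[OF good_perm[OF good_W[OF U] bijP]]) (simp add: U_coef_W)
  note gu = good_unitary[OF gK]
  show ?thesis
    unfolding unitary_evolution_def well_formed_def l2norm_def l2_eq U_op_eq
    using gu by simp
qed

definition ex :: "'a list \<Rightarrow> int \<Rightarrow> 'a list" where "ex x = (\<lambda>i. if i = 0 then x else q)"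

lemma ex_X: "x \<in> S \<Longrightarrow> ex x \<in> X"
proof -
  assume x: "x \<in> S"
  have "{i. ex x i \<noteq> q} \<subseteq> {0}" by (auto simp: ex_def)
  then have "finite {i. ex x i \<noteq> q}" using finite_subset by blast
  then show "ex x \<in> X" using x qS by (auto simp: X_iff ex_def)
qed

lemma W_ex:
  assumes d: "d \<in> X" and x: "x \<in> S"
  shows "W d (ex x) = (if d \<in> ex ` S then dQ x (d 0) else 0)"
proof (cases "\<forall>i. i \<noteq> 0 \<longrightarrow> d i = q")
  case True
  then have "d = ex (d 0)" by (auto simp: ex_def)
  moreover have "d 0 \<in> S" using d by (simp add: X_iff)
  ultimately have dS: "d \<in> ex ` S" by blast
  have "W d (ex x) = (\<Prod>i\<in>{0}. dQ (ex x i) (d i))"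
    by (rule W_ext[OF d ex_X[OF x]]) (use True in \<open>auto simp: ex_def\<close>)
  then show ?thesis using dS by (simp add: ex_def)
next
  case False
  then obtain i where i: "i \<noteq> 0" "d i \<noteq> q" by auto
  then have "d \<notin> ex ` S" by (auto simp: ex_def)
  moreover have "W d (ex x) = 0" by (rule W_zero2[OF d ex_X[OF x] i(2)]) (use i in \<open>simp add: ex_def\<close>)
  ultimately show ?thesis by simp
qed

lemma ex_inj: "inj_on ex S"
  by (rule inj_onI) (metis ex_def)

lemma wf_iso:
  assumes wf: "well_formed S q N dl"
  shows "(\<Sum>y\<in>S. (cmod (\<Sum>x\<in>S. dQ x y * a x))\<^sup>2) = (\<Sum>x\<in>S. (cmod (a x))\<^sup>2)"
proof -
  define cx where "cx x = P' (ex x)" for x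
  have cxX: "cx x \<in> X" if "x \<in> S" for x using P'_X[OF ex_X[OF that]] by (simp add: cx_def)
  have Pcx: "P (cx x) = ex x" if "x \<in> S" for x using P_P'[OF ex_X[OF that]] by (simp add: cx_def)
  have cx_inj: "inj_on cx S"
  proof (rule inj_onI)
    fix x y assume "x \<in> S" "y \<in> S" "cx x = cx y"
    then have "ex x = ex y" using Pcx by metis
    then show "x = y" by (metis ex_def)
  qed
  define F where "F = cx ` S"
  have fF: "finite F" using finS by (simp add: F_def)
  have FX: "F \<subseteq> X" using cxX by (auto simp: F_def)
  define u where "u c = (if c \<in> F then a (P c 0) else 0)" for c
  have u_cx: "u (cx x) = a x" if "x \<in> S" for x using that Pcx by (auto simp: u_def F_def ex_def)
  note s1 = fin_supp_infsum[OF fF FX, of "\<lambda>c. (cmod (u c))\<^sup>2"]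
  have uL: "u \<in> l2 S q" unfolding l2_def using s1 FX by (auto simp: u_def)
  have nu: "(\<Sum>\<^sub>\<infinity>c\<in>X. (cmod (u c))\<^sup>2) = (\<Sum>x\<in>S. (cmod (a x))\<^sup>2)"
  proof -
    have "(\<Sum>\<^sub>\<infinity>c\<in>X. (cmod (u c))\<^sup>2) = (\<Sum>c\<in>F. (cmod (u c))\<^sup>2)"
      by (rule s1(2)) (simp add: u_def)
    also have "\<dots> = (\<Sum>x\<in>S. (cmod (u (cx x)))\<^sup>2)" by (simp add: F_def sum.reindex[OF cx_inj])
    also have "\<dots> = (\<Sum>x\<in>S. (cmod (a x))\<^sup>2)" by (rule sum.cong) (auto simp: u_cx)
    finally show ?thesis .
  qed
  have Uu: "U_op S q N dl u d = (\<Sum>x\<in>S. dQ x (d 0) * a x)" if d: "d \<in> X" "d \<in> ex ` S" for d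
  proof -
    have "U_op S q N dl u d = (\<Sum>\<^sub>\<infinity>c\<in>X. U_coef q N dl d c * u c)" using d by (simp add: U_op_def)
    also have "\<dots> = (\<Sum>c\<in>F. U_coef q N dl d c * u c)"
      by (rule fin_supp_infsum(2)[OF fF FX]) (simp add: u_def)
    also have "\<dots> = (\<Sum>x\<in>S. U_coef q N dl d (cx x) * u (cx x))" by (simp add: F_def sum.reindex[OF cx_inj])
    also have "\<dots> = (\<Sum>x\<in>S. dQ x (d 0) * a x)"
      by (rule sum.cong) (use d in \<open>auto simp: U_coef_W cxX Pcx u_cx W_ex\<close>)
    finally show ?thesis .
  qed
  have Uu0: "U_op S q N dl u d = 0" if d: "d \<in> X" "d \<notin> ex ` S" for d
  proof -
    have "U_op S q N dl u d = (\<Sum>\<^sub>\<infinity>c\<in>X. U_coef q N dl d c * u c)" using d by (simp add: U_op_def)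
    also have "\<dots> = (\<Sum>c\<in>F. U_coef q N dl d c * u c)"
      by (rule fin_supp_infsum(2)[OF fF FX]) (simp add: u_def)
    also have "\<dots> = (\<Sum>x\<in>S. U_coef q N dl d (cx x) * u (cx x))" by (simp add: F_def sum.reindex[OF cx_inj])
    also have "\<dots> = 0"
      by (rule sum.neutral) (use d in \<open>auto simp: U_coef_W cxX Pcx u_cx W_ex\<close>)
    finally show ?thesis .
  qed
  have exX: "ex ` S \<subseteq> X" using ex_X by auto
  have fE: "finite (ex ` S)" using finS by simp
  have nU: "(\<Sum>\<^sub>\<infinity>d\<in>X. (cmod (U_op S q N dl u d))\<^sup>2) = (\<Sum>y\<in>S. (cmod (\<Sum>x\<in>S. dQ x y * a x))\<^sup>2)"
  proof -
    have "(\<Sum>\<^sub>\<infinity>d\<in>X. (cmod (U_op S q N dl u d))\<^sup>2) = (\<Sum>d\<in>ex ` S. (cmod (U_op S q N dl u d))\<^sup>2)"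
      by (rule fin_supp_infsum(2)[OF fE exX]) (simp add: Uu0)
    also have "\<dots> = (\<Sum>y\<in>S. (cmod (U_op S q N dl u (ex y)))\<^sup>2)" by (simp add: sum.reindex[OF ex_inj])
    also have "\<dots> = (\<Sum>y\<in>S. (cmod (\<Sum>x\<in>S. dQ x y * a x))\<^sup>2)"
      by (rule sum.cong) (auto simp: Uu ex_X ex_def[symmetric], simp add: ex_def)
    finally show ?thesis .
  qed
  have "l2norm S q (U_op S q N dl u) = l2norm S q u" using wf uL by (simp add: well_formed_def)
  then have "(\<Sum>\<^sub>\<infinity>d\<in>X. (cmod (U_op S q N dl u d))\<^sup>2) = (\<Sum>\<^sub>\<infinity>c\<in>X. (cmod (u c))\<^sup>2)"
    unfolding l2norm_def by (subst (asm) real_sqrt_eq_iff) 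
  then show ?thesis using nU nu by simp
qed

lemma wf_imp:
  assumes wf: "well_formed S q N dl"
  shows "unitary_mat S (\<lambda>y x. dQ x y)"
proof -
  have col: "\<forall>x\<in>S. \<forall>x'\<in>S. (\<Sum>y\<in>S. cnj (dQ x y) * dQ x' y) = (if x = x' then 1 else 0)"
    using polar[OF finS wf_iso[OF wf]] by blast
  show ?thesis unfolding unitary_mat_def
    using col col_to_row[OF finS, of "\<lambda>y x. dQ x y"] by simp
qed

lemma main:
  "(unitary_mat S (\<lambda>y x. dQ x y) \<longleftrightarrow> well_formed S q N dl)
   \<and> (well_formed S q N dl \<longleftrightarrow> unitary_evolution S q N dl)"
  using unitary_imp wf_imp unfolding unitary_evolution_def by blast

end

theorem theorem6:
  fixes Sigs :: "nat \<Rightarrow> 'a set" and q :: "'a list" and N :: "int list"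
    and \<delta>Q :: "'a list \<Rightarrow> 'a list \<Rightarrow> complex"
  assumes "\<forall>j < length N. finite (Sigs j) \<and> Sigs j \<noteq> {}"
    and "lqca (PSig Sigs (length N)) q N (\<lambda>w. \<delta>Q (delta_p (length N) w))"
  shows "(unitary_mat (PSig Sigs (length N)) (\<lambda>y x. \<delta>Q x y)
            \<longleftrightarrow> well_formed (PSig Sigs (length N)) q N (\<lambda>w. \<delta>Q (delta_p (length N) w)))
       \<and> (well_formed (PSig Sigs (length N)) q N (\<lambda>w. \<delta>Q (delta_p (length N) w))
            \<longleftrightarrow> unitary_evolution (PSig Sigs (length N)) q N (\<lambda>w. \<delta>Q (delta_p (length N) w)))"
proof -
  interpret plq Sigs q N \<delta>Q using assms by unfold_locales
  show ?thesis using main by simp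
qed

end
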